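(* Consider a generalized linear model with data $\mathcal{D}=(X,\mathbf{y})$, $X\in\mathbb{R}^{n\times(p+1)}$ (first column the intercept column of ones), log-likelihood $\ell(\beta_0,\boldsymbol{\beta};\mathcal{D})$ with $-\ell$ convex in $(\beta_0,\boldsymbol{\beta})$, $m$ mandatory predictors (columns $1,\dots,m$), and fix $\lambda\ge 0$. For $\mathbf{t}=(t_1,\dots,t_{p-m})\in[0,1]^{p-m}$ let $T_{\mathbf{t}}=\mathrm{diag}(1,\dots,1,t_1,\dots,t_{p-m})\in\mathbb{R}^{p\times p}$ (with $m$ leading ones) and $\Gamma_{\mathbf{t}}=\sqrt{I-T_{\mathbf{t}}^2}$ (elementwise square root of the diagonal). For $\delta>0$ define $$h_{\delta,\lambda}(\mathbf{t},\beta_0,\boldsymbol{\beta})=-\tfrac1n\ell(\beta_0,T_{\mathbf{t}}\boldsymbol{\beta};\mathcal{D})+\lambda\|\boldsymbol{\beta}\|_2^2+\delta\|\Gamma_{\mathbf{t}}\boldsymbol{\beta}\|_2^2,\qquad f_{\delta,\lambda}(\mathbf{t})=\min_{\beta_0\in\mathbb{R},\,\boldsymbol{\beta}\in\mathbb{R}^p}h_{\delta,\lambda}(\mathbf{t},\beta_0,\boldsymbol{\beta}).$$ Then for every fixed $\mathbf{t}\in(0,1)^{p-m}$, the map $\delta\mapsto f_{\delta,\lambda}(\mathbf{t})$ is monotone non-decreasing and continuous on $\delta>0$.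
   Context: $\ell(\beta_0,\boldsymbol{\beta};\mathcal{D})$ denotes the log-likelihood of the GLM, which depends on the coefficients through the linear predictors $\beta_0+\mathbf{x}_i^\top\boldsymbol{\beta}$, $i=1,\dots,n$. The value function $f_{\delta,\lambda}(\mathbf{t})$ is the minimum (assumed attained) of the inner objective over the coefficients. *)

theory Defs
  imports "HOL-Analysis.Analysis"
begin

text \<open>Coefficient vectors in R^p are represented as functions nat => real, indexed by 1..p;
  t in [0,1]^(p-m) is a function nat => real indexed by 1..p-m.
  The design matrix (without the intercept column) is X :: nat => nat => real, rows 1..n, columns 1..p.\<close>

definition linpred :: "nat \<Rightarrow> (nat \<Rightarrow> nat \<Rightarrow> real) \<Rightarrow> real \<Rightarrow> (nat \<Rightarrow> real) \<Rightarrow> nat \<Rightarrow> real" where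
  "linpred p X b0 b i = b0 + (\<Sum>j=1..p. X i j * b j)"

definition Tdiag :: "nat \<Rightarrow> (nat \<Rightarrow> real) \<Rightarrow> nat \<Rightarrow> real" where
  "Tdiag m t j = (if j \<le> m then 1 else t (j - m))"

definition Gdiag :: "nat \<Rightarrow> (nat \<Rightarrow> real) \<Rightarrow> nat \<Rightarrow> real" where
  "Gdiag m t j = sqrt (1 - (Tdiag m t j)\<^sup>2)"

definition hfun :: "nat \<Rightarrow> nat \<Rightarrow> nat \<Rightarrow> (real \<Rightarrow> (nat \<Rightarrow> real) \<Rightarrow> real) \<Rightarrow> real \<Rightarrow> real
    \<Rightarrow> (nat \<Rightarrow> real) \<Rightarrow> real \<Rightarrow> (nat \<Rightarrow> real) \<Rightarrow> real" where
  "hfun n p m ll lam delta t b0 b =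
     - (1 / real n) * ll b0 (\<lambda>j. Tdiag m t j * b j)
     + lam * (\<Sum>j=1..p. (b j)\<^sup>2)
     + delta * (\<Sum>j=1..p. (Gdiag m t j * b j)\<^sup>2)"

text \<open>Value function: the infimum (= minimum, when attained) of h over beta_0 and beta in R^p.\<close>
definition ffun :: "nat \<Rightarrow> nat \<Rightarrow> nat \<Rightarrow> (real \<Rightarrow> (nat \<Rightarrow> real) \<Rightarrow> real) \<Rightarrow> real \<Rightarrow> real
    \<Rightarrow> (nat \<Rightarrow> real) \<Rightarrow> real" where
  "ffun n p m ll lam delta t =
     (INF bb \<in> {bb :: real \<times> (nat \<Rightarrow> real). \<forall>j. j \<notin> {1..p} \<longrightarrow> snd bb j = 0}.
        hfun n p m ll lam delta t (fst bb) (snd bb))"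

end

theory Submission
  imports Defs
begin

theorem proposition1:
  fixes n p m :: nat
    and X :: "nat \<Rightarrow> nat \<Rightarrow> real"
    and ll :: "real \<Rightarrow> (nat \<Rightarrow> real) \<Rightarrow> real"
    and lam :: real
    and t :: "nat \<Rightarrow> real"
  assumes n_pos: "0 < n"
    and m_le_p: "m \<le> p"
    and glm: "\<And>b0 b c0 c. (\<forall>i\<in>{1..n}. linpred p X b0 b i = linpred p X c0 c i)
                \<Longrightarrow> ll b0 b = ll c0 c"
    and convex: "\<And>a0 a c0 c u. 0 \<le> u \<Longrightarrow> u \<le> 1 \<Longrightarrow>
        - ll ((1 - u) * a0 + u * c0) (\<lambda>j. (1 - u) * a j + u * c j)
          \<le> (1 - u) * (- ll a0 a) + u * (- ll c0 c)"
    and lam_nonneg: "0 \<le> lam"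
    and t_in: "\<forall>k\<in>{1..p - m}. 0 < t k \<and> t k < 1"
    and attained: "\<forall>delta>0. \<exists>b0 b. (\<forall>j. j \<notin> {1..p} \<longrightarrow> b j = 0) \<and>
        (\<forall>c0 c. hfun n p m ll lam delta t b0 b \<le> hfun n p m ll lam delta t c0 c)"
  shows "mono_on {0<..} (\<lambda>delta. ffun n p m ll lam delta t)
       \<and> continuous_on {0<..} (\<lambda>delta. ffun n p m ll lam delta t)"
proof -
  define S where "S = {bb :: real \<times> (nat \<Rightarrow> real). \<forall>j. j \<notin> {1..p} \<longrightarrow> snd bb j = 0}"
  define A where "A = (\<lambda>b0 b. - (1 / real n) * ll b0 (\<lambda>j. Tdiag m t j * b j) + lam * (\<Sum>j=1..p. (b j)\<^sup>2))"
  define G where "G = (\<lambda>b. (\<Sum>j=1..p. (Gdiag m t j * b j)\<^sup>2))"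
  have hlin: "hfun n p m ll lam d t b0 b = A b0 b + d * G b" for d b0 b
    unfolding hfun_def A_def G_def by simp
  have Gnn: "0 \<le> G b" for b unfolding G_def by (intro sum_nonneg) auto
  define F where "F = (\<lambda>d. ffun n p m ll lam d t)"
  have Fmin: "\<exists>b0 b. F d = A b0 b + d * G b \<and> (\<forall>c0 c. F d \<le> A c0 c + d * G c)" if "d > 0" for d
  proof -
    obtain b0 b where b: "\<forall>j. j \<notin> {1..p} \<longrightarrow> b j = 0"
      "\<forall>c0 c. hfun n p m ll lam d t b0 b \<le> hfun n p m ll lam d t c0 c"
      using attained \<open>d > 0\<close> by blast
    have "F d = hfun n p m ll lam d t b0 b"
      unfolding F_def ffun_def
      proof (rule cInf_eq_minimum)
        show "hfun n p m ll lam d t b0 b \<in> (\<lambda>bb. hfun n p m ll lam d t (fst bb) (snd bb)) ` {bb :: real \<times> (nat \<Rightarrow> real). \<forall>j. j \<notin> {1..p} \<longrightarrow> snd bb j = 0}"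
          by (rule image_eqI[of _ _ "(b0, b)"]) (use b in auto)
      qed (use b in auto)
    then show ?thesis using b(2) by (auto simp: hlin)
  qed
  have mono: "mono_on {0<..} F"
  proof (rule mono_onI)
    fix r s :: real assume rs: "r \<in> {0<..}" "s \<in> {0<..}" "r \<le> s"
    obtain b0 b where b: "F s = A b0 b + s * G b" using Fmin rs by force
    obtain c0 c where "\<forall>c0 c. F r \<le> A c0 c + r * G c" using Fmin rs by force
    then have "F r \<le> A b0 b + r * G b" by blast
    also have "\<dots> \<le> A b0 b + s * G b" using Gnn[of b] rs by (simp add: mult_right_mono)
    finally show "F r \<le> F s" using b by simp
  qed
  have cvx: "convex_on {0<..} (\<lambda>d. - F d)"
  proof (rule convex_onI)
    fix u x y :: real assume u: "0 < u" "u < 1" and xy: "x \<in> {0<..}" "y \<in> {0<..}"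
    have pos: "(1 - u) *\<^sub>R x + u *\<^sub>R y > 0" using u xy
      by (simp add: add_pos_pos)
    obtain b0 b where b: "F ((1 - u) *\<^sub>R x + u *\<^sub>R y) = A b0 b + ((1 - u) *\<^sub>R x + u *\<^sub>R y) * G b"
      using Fmin[OF pos] by blast
    have "F x \<le> A b0 b + x * G b" using Fmin xy by force
    moreover have "F y \<le> A b0 b + y * G b" using Fmin xy by force
    ultimately have "(1 - u) * F x + u * F y \<le> (1 - u) * (A b0 b + x * G b) + u * (A b0 b + y * G b)"
      using u by (intro add_mono mult_left_mono) auto
    also have "\<dots> = F ((1 - u) *\<^sub>R x + u *\<^sub>R y)" using b by (simp add: algebra_simps)
    finally show "- F ((1 - u) *\<^sub>R x + u *\<^sub>R y) \<le> (1 - u) * - F x + u * - F y" by simp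
  qed (simp add: convex_real_interval)
  have "continuous_on {0<..} (\<lambda>d. - F d)"
    by (rule convex_on_continuous[OF _ cvx]) simp
  then have "continuous_on {0<..} (\<lambda>d. - (- F d))" by (rule continuous_on_minus)
  then have "continuous_on {0<..} F" by simp
  with mono show ?thesis unfolding F_def by simp
qed

end
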